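(* Let $S\in\{0,1\}^\infty$. 1. If $\mathrm{Dim}_{\mathrm{FS}}(S)=0$, then $S$ is finite-state shallow. 2. If $S$ is normal (equivalently, $\dim_{\mathrm{FS}}(S)=1$), then $S$ is finite-state shallow.
   Context: A finite-state transducer (FST) is a 4-tuple $T=(Q,\delta,\nu,q_0)$ with $Q$ a nonempty finite set of states, $\delta:Q\times\{0,1\}\to Q$, $\nu:Q\times\{0,1\}\to\{0,1\}^*$, $q_0\in Q$, every state reachable from $q_0$; $\widehat\delta(\lambda)=q_0$, $\widehat\delta(xa)=\delta(\widehat\delta(x),a)$, $T(\lambda)=\lambda$, $T(xa)=T(x)\nu(\widehat\delta(x),a)$. Fix a standard binary representation $\sigma_T$ of each FST, $|T|=|\sigma_T|$, $\mathrm{FST}^{\leq k}=\{T:|T|\le k\}$, and $\mathrm{FS}^k(x)=\min\{|p|:\exists T\in\mathrm{FST}^{\le k},\ T(p)=x\}$. For a sequence $S$, $S\upharpoonright n$ denotes its first $n$ bits. The finite-state dimension and strong dimension are $\dim_{\mathrm{FS}}(S)=\lim_{k\to\infty}\liminf_{n\to\infty}\mathrm{FS}^k(S\upharpoonright n)/n$ and $\mathrm{Dim}_{\mathrm{FS}}(S)=\lim_{k\to\infty}\limsup_{n\to\infty}\mathrm{FS}^k(S\upharpoonright n)/n$. $S$ is normal (in Borel's sense) if for every $k$, every string of length $k$ occurs in $S$ with limiting frequency $2^{-k}$; it is known that $S$ is normal iff $\dim_{\mathrm{FS}}(S)=1$. $S$ is finite-state deep if $(\exists\alpha>0)(\forall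 k\in\mathbb{N})(\exists k'\in\mathbb{N})(\exists^\infty n\in\mathbb{N})\ \mathrm{FS}^k(S\upharpoonright n)-\mathrm{FS}^{k'}(S\upharpoonright n)\ge\alpha n$; $S$ is finite-state shallow if it is not finite-state deep. *)

theory Defs
  imports "HOL-Analysis.Analysis"
begin

(* Bits are booleans (False = 0, True = 1); binary strings are bool lists;
   infinite binary sequences are functions nat => bool. *)

(* A finite-state transducer with state set Q = {0..<length trans} is stored as
   (q0, trans), where  trans ! q = ((delta(q,0), nu(q,0)), (delta(q,1), nu(q,1))). *)
type_synonym fst = "nat \<times> ((nat \<times> bool list) \<times> (nat \<times> bool list)) list"

definition fst_start :: "fst \<Rightarrow> nat" where
  "fst_start T = fst T"

definition fst_nstates :: "fst \<Rightarrow> nat" where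
  "fst_nstates T = length (snd T)"

definition fst_delta :: "fst \<Rightarrow> nat \<Rightarrow> bool \<Rightarrow> nat" where
  "fst_delta T q a = (if a then fst (snd (snd T ! q)) else fst (fst (snd T ! q)))"

definition fst_nu :: "fst \<Rightarrow> nat \<Rightarrow> bool \<Rightarrow> bool list" where
  "fst_nu T q a = (if a then snd (snd (snd T ! q)) else snd (fst (snd T ! q)))"

definition fst_delta_hat :: "fst \<Rightarrow> bool list \<Rightarrow> nat" where
  "fst_delta_hat T x = foldl (fst_delta T) (fst_start T) x"

definition fst_output :: "fst \<Rightarrow> bool list \<Rightarrow> bool list" where
  "fst_output T x = snd (foldl (\<lambda>(q, out) a. (fst_delta T q a, out @ fst_nu T q a))
                               (fst_start T, []) x)"

definition wf_fst :: "fst \<Rightarrow> bool" where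
  "wf_fst T \<longleftrightarrow> fst_nstates T > 0 \<and> fst_start T < fst_nstates T
     \<and> (\<forall>q < fst_nstates T. \<forall>a. fst_delta T q a < fst_nstates T)
     \<and> (\<forall>q < fst_nstates T. \<exists>x. fst_delta_hat T x = q)"

(* sigma is the fixed binary representation of transducers; |T| = length (sigma T).
   FS^k(x) = min{|p| : T in FST^{<=k}, T(p) = x}   (min of the empty set = \<infinity>) *)
definition FS :: "(fst \<Rightarrow> bool list) \<Rightarrow> nat \<Rightarrow> bool list \<Rightarrow> ereal" where
  "FS \<sigma> k x = (INF p \<in> {p. \<exists>T. wf_fst T \<and> length (\<sigma> T) \<le> k \<and> fst_output T p = x}.
                   ereal (real (length p)))"

definition prefix_seq :: "(nat \<Rightarrow> bool) \<Rightarrow> nat \<Rightarrow> bool list" where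
  "prefix_seq S n = map S [0..<n]"

definition dim_FS :: "(fst \<Rightarrow> bool list) \<Rightarrow> (nat \<Rightarrow> bool) \<Rightarrow> ereal" where
  "dim_FS \<sigma> S = lim (\<lambda>k. liminf (\<lambda>n. FS \<sigma> k (prefix_seq S n) / ereal (real n)))"

definition Dim_FS :: "(fst \<Rightarrow> bool list) \<Rightarrow> (nat \<Rightarrow> bool) \<Rightarrow> ereal" where
  "Dim_FS \<sigma> S = lim (\<lambda>k. limsup (\<lambda>n. FS \<sigma> k (prefix_seq S n) / ereal (real n)))"

definition normal_seq :: "(nat \<Rightarrow> bool) \<Rightarrow> bool" where
  "normal_seq S \<longleftrightarrow> (\<forall>k. \<forall>w::bool list. length w = k \<longrightarrow>
     (\<lambda>n. real (card {i. i < n \<and> map S [i..<i+k] = w}) / real n)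
       \<longlonglongrightarrow> 1 / 2 ^ k)"

definition fs_deep :: "(fst \<Rightarrow> bool list) \<Rightarrow> (nat \<Rightarrow> bool) \<Rightarrow> bool" where
  "fs_deep \<sigma> S \<longleftrightarrow> (\<exists>\<alpha>::real. \<alpha> > 0 \<and> (\<forall>k. \<exists>k'. \<exists>\<^sub>\<infinity>n.
      FS \<sigma> k (prefix_seq S n) - FS \<sigma> k' (prefix_seq S n) \<ge> ereal (\<alpha> * real n)))"

definition fs_shallow :: "(fst \<Rightarrow> bool list) \<Rightarrow> (nat \<Rightarrow> bool) \<Rightarrow> bool" where
  "fs_shallow \<sigma> S \<longleftrightarrow> \<not> fs_deep \<sigma> S"

end

theory Submission
  imports Defs
begin

definition run :: "fst \<Rightarrow> nat \<Rightarrow> bool list \<Rightarrow> nat \<times> bool list" where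
  "run T q y = foldl (\<lambda>(q, out) a. (fst_delta T q a, out @ fst_nu T q a)) (q, []) y"

lemma foldl_gen:
  "foldl (\<lambda>(q, out) a. (fst_delta T q a, out @ fst_nu T q a)) (q, os) y
     = (fst (run T q y), os @ snd (run T q y))"
proof (induction y arbitrary: q os)
  case Nil then show ?case by (simp add: run_def)
next
  case (Cons a y)
  have "run T q (a # y) = foldl (\<lambda>(q, out) a. (fst_delta T q a, out @ fst_nu T q a)) (fst_delta T q a, [] @ fst_nu T q a) y"
    by (simp add: run_def)
  also have "\<dots> = (fst (run T (fst_delta T q a) y), fst_nu T q a @ snd (run T (fst_delta T q a) y))"
    using Cons.IH by simp
  finally show ?case using Cons.IH by simp
qed

lemma run_Nil[simp]: "run T q [] = (q, [])" by (simp add: run_def)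

lemma run_Cons: "run T q (a # y) = (fst (run T (fst_delta T q a) y), fst_nu T q a @ snd (run T (fst_delta T q a) y))"
  using foldl_gen[of T "fst_delta T q a" "fst_nu T q a" y] by (simp add: run_def)

lemma run_append: "run T q (x @ y) = (fst (run T (fst (run T q x)) y), snd (run T q x) @ snd (run T (fst (run T q x)) y))"
proof -
  have "run T q (x @ y) = foldl (\<lambda>(q, out) a. (fst_delta T q a, out @ fst_nu T q a)) (run T q x) y"
    by (simp add: run_def)
  also have "\<dots> = foldl (\<lambda>(q, out) a. (fst_delta T q a, out @ fst_nu T q a)) (fst (run T q x), snd (run T q x)) y"
    by simp
  finally show ?thesis using foldl_gen by (metis prod.collapse)
qed

lemma output_run: "fst_output T p = snd (run T (fst_start T) p)"
  by (simp add: fst_output_def run_def)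

lemma run_state: "wf_fst T \<Longrightarrow> q < fst_nstates T \<Longrightarrow> fst (run T q y) < fst_nstates T"
  by (induction y arbitrary: q) (auto simp: run_Cons wf_fst_def)

definition maxnu :: "fst \<Rightarrow> nat" where
  "maxnu T = (\<Sum>q<fst_nstates T. length (fst_nu T q True) + length (fst_nu T q False))"

lemma nu_le: "q < fst_nstates T \<Longrightarrow> length (fst_nu T q a) \<le> maxnu T"
proof -
  assume q: "q < fst_nstates T"
  have "length (fst_nu T q a) \<le> length (fst_nu T q True) + length (fst_nu T q False)"
    by (cases a) auto
  also have "\<dots> \<le> maxnu T" unfolding maxnu_def
    by (rule member_le_sum[where f = "\<lambda>q. length (fst_nu T q True) + length (fst_nu T q False)"]) (use q in auto)
  finally show ?thesis .
qed

lemma run_len: "wf_fst T \<Longrightarrow> q < fst_nstates T \<Longrightarrow> length (snd (run T q y)) \<le> maxnu T * length y"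
proof (induction y arbitrary: q)
  case Nil then show ?case by simp
next
  case (Cons a y)
  have q': "fst_delta T q a < fst_nstates T" using Cons.prems by (auto simp: wf_fst_def)
  have "length (snd (run T q (a # y))) = length (fst_nu T q a) + length (snd (run T (fst_delta T q a) y))"
    by (simp add: run_Cons)
  also have "\<dots> \<le> maxnu T + maxnu T * length y"
    using nu_le[OF Cons.prems(2), of a] Cons.IH[OF Cons.prems(1) q'] by linarith
  finally show ?case by simp
qed

fun pieces :: "fst \<Rightarrow> nat \<Rightarrow> bool list list \<Rightarrow> bool list list" where
  "pieces T q [] = []"
| "pieces T q (u # us) = snd (run T q u) # pieces T (fst (run T q u)) us"

lemma run_concat: "snd (run T q (concat us)) = concat (pieces T q us)"
  by (induction us arbitrary: q) (auto simp: run_append)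

lemma length_pieces[simp]: "length (pieces T q us) = length us"
  by (induction us arbitrary: q) auto

lemma pieces_in: "wf_fst T \<Longrightarrow> q < fst_nstates T \<Longrightarrow> \<forall>u\<in>set us. length u = b \<Longrightarrow>
   set (pieces T q us) \<subseteq> (\<lambda>(q, u). snd (run T q u)) ` ({..<fst_nstates T} \<times> {u. length u = b})"
proof (induction us arbitrary: q)
  case Nil then show ?case by simp
next
  case (Cons u us)
  have "fst (run T q u) < fst_nstates T" using run_state Cons.prems by blast
  then show ?case using Cons by force
qed

lemma chunk: "0 < b \<Longrightarrow> \<exists>us r. p = concat us @ r \<and> (\<forall>u\<in>set us. length u = b) \<and> length r < b"
proof (induction p rule: length_induct)
  case (1 p)
  show ?case
  proof (cases "length p < b")
    case True then show ?thesis by (intro exI[of _ "[]"] exI[of _ p]) simp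
  next
    case False
    then have "length (drop b p) < length p" using 1 by simp
    then obtain us r where "drop b p = concat us @ r" "\<forall>u\<in>set us. length u = b" "length r < b"
      using 1 by blast
    then show ?thesis using False
      by (intro exI[of _ "take b p # us"] exI[of _ r]) (auto, metis append_take_drop_id)
  qed
qed

lemma length_concat_const: "\<forall>u\<in>set us. length u = b \<Longrightarrow> length (concat us) = length us * b"
  by (induction us) auto

definition idT :: fst where "idT = (0, [((0, [False]), (0, [True]))])"

lemma idT_wf: "wf_fst idT"
  unfolding wf_fst_def idT_def fst_nstates_def fst_start_def fst_delta_def fst_delta_hat_def
  by (auto intro: exI[of _ "[]"])

lemma idT_out: "fst_output idT x = x"
proof -
  have "fst (run idT 0 x) = 0 \<and> snd (run idT 0 x) = x"
    by (induction x) (auto simp: run_Cons idT_def fst_delta_def fst_nu_def)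
  then show ?thesis by (simp add: output_run idT_def fst_start_def)
qed


lemma count_occ:
  assumes "w \<noteq> []" "map S [off..<off + length (concat ws)] = concat ws"
  shows "count_list ws w \<le> card {j. off \<le> j \<and> j + length w \<le> off + length (concat ws) \<and> map S [j..<j + length w] = w}"
  using assms(2)
proof (induction ws arbitrary: off)
  case Nil then show ?case by simp
next
  case (Cons v ws)
  let ?L = "length (concat ws)"
  have e: "[off..<off + length (concat (v # ws))] = [off..<off + length v] @ [off + length v..<off + length v + ?L]"
    using upt_add_eq_append[of off "off + length v" ?L] by (simp add: add.assoc)
  have "map S [off..<off + length v] @ map S [off + length v..<off + length v + ?L] = v @ concat ws"
    using Cons.prems e by simp
  then have h1: "map S [off..<off + length v] = v" and h2: "map S [off + length v..<off + length v + ?L] = concat ws"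
    by (simp_all add: append_eq_append_conv)
  have IH: "count_list ws w \<le> card {j. off + length v \<le> j \<and> j + length w \<le> off + length v + ?L \<and> map S [j..<j + length w] = w}"
    using Cons.IH[OF h2] .
  let ?A = "{j. off \<le> j \<and> j + length w \<le> off + length (concat (v # ws)) \<and> map S [j..<j + length w] = w}"
  let ?A' = "{j. off + length v \<le> j \<and> j + length w \<le> off + length v + ?L \<and> map S [j..<j + length w] = w}"
  have finA: "finite ?A" by (rule finite_subset[of _ "{..off + length (concat (v # ws))}"]) auto
  show ?case
  proof (cases "v = w")
    case True
    have off_notin: "off \<notin> ?A'" using assms(1) True by auto
    have "insert off ?A' \<subseteq> ?A" using True h1 by auto
    then have "card (insert off ?A') \<le> card ?A" using finA card_mono by blast
    moreover have "finite ?A'" by (rule finite_subset[of _ "{..off + length v + ?L}"]) auto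
    ultimately have "card ?A' + 1 \<le> card ?A" using off_notin by simp
    then show ?thesis using IH True by simp
  next
    case False
    have "?A' \<subseteq> ?A" by auto
    then have "card ?A' \<le> card ?A" using finA card_mono by blast
    then show ?thesis using IH False by simp
  qed
qed

lemma len_split: "length (concat ws) \<le> d * length ws + sum_list (map (\<lambda>w. if d \<le> length w then length w else 0) ws)"
  by (induction ws) auto

lemma ratio_mono: assumes "a \<le> j" "1 \<le> a" shows "real j / 2 ^ j \<le> real a / 2 ^ a"
  using assms(1)
proof (induction j rule: dec_induct)
  case base then show ?case by simp
next
  case (step j)
  have "real (Suc j) / 2 ^ Suc j \<le> real j / 2 ^ j"
    using step.hyps assms(2) by (simp add: field_simps)
  then show ?case using step.IH by linarith
qed

lemma card_bool_lists: "card {u :: bool list. length u = b} = 2 ^ b"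
  using card_lists_length_eq[of "UNIV :: bool set" b] by simp

lemma finite_bool_lists: "finite {u :: bool list. length u = b}"
  using finite_lists_length_eq[of "UNIV :: bool set" b] by simp


lemma exists_c: assumes "0 < (e::real)" shows "\<exists>c::nat. 1 \<le> c \<and> real c / 2 ^ c < e"
proof -
  have "(\<lambda>c::nat. real c / 2 ^ c) \<longlonglongrightarrow> 0" using lim_n_over_pown[of "2::real"] by simp
  then have "\<forall>\<^sub>F c in sequentially. real c / 2 ^ c < e" using assms order_tendstoD(2) by blast
  moreover have "\<forall>\<^sub>F c in sequentially. (1::nat) \<le> c" by (rule eventually_ge_at_top)
  ultimately have "\<forall>\<^sub>F c in sequentially. 1 \<le> c \<and> real c / 2 ^ c < e" by eventually_elim auto
  then obtain K where "\<forall>c\<ge>K. 1 \<le> c \<and> real c / 2 ^ c < e" by (auto simp: eventually_sequentially)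
  then show ?thesis by blast
qed

lemma freq_bound:
  assumes nrm: "normal_seq S" and be: "0 < \<beta>"
  shows "\<forall>\<^sub>F n in sequentially. real (g::nat) * real (card {i. i < n \<and> map S [i..<i + length w] = w})
            \<le> real n * (real g / 2 ^ length w + \<beta>)"
proof -
  have t: "(\<lambda>n. real (card {i. i < n \<and> map S [i..<i + length w] = w}) / real n) \<longlonglongrightarrow> 1 / 2 ^ length w"
    using nrm unfolding normal_seq_def by blast
  have "(\<lambda>n. real g * (real (card {i. i < n \<and> map S [i..<i + length w] = w}) / real n)) \<longlonglongrightarrow> real g * (1 / 2 ^ length w)"
    by (rule tendsto_mult_left[OF t])
  then have "\<forall>\<^sub>F n in sequentially. real g * (real (card {i. i < n \<and> map S [i..<i + length w] = w}) / real n) < real g / 2 ^ length w + \<beta>"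
    using be order_tendstoD(2) by fastforce
  moreover have "\<forall>\<^sub>F n in sequentially. (1::nat) \<le> n" by (rule eventually_ge_at_top)
  ultimately show ?thesis
  proof eventually_elim
    case (elim n)
    then have "real n > 0" by simp
    with elim(1) show ?case by (simp add: field_simps)
  qed
qed

lemma compress_lb:
  assumes wf: "wf_fst T" and nrm: "normal_seq S" and a: "0 < \<alpha>"
  shows "\<forall>\<^sub>F n in sequentially. \<forall>p. fst_output T p = prefix_seq S n \<longrightarrow> (1 - \<alpha>) * real n < real (length p)"
proof -
  define m where "m = fst_nstates T"
  have m0: "0 < m" using wf by (simp add: wf_fst_def m_def)
  define M where "M = maxnu T"
  define N :: nat where "N = nat \<lceil>4 / \<alpha>\<rceil> + 1"
  have N1: "1 \<le> N" by (simp add: N_def)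
  have "4 / \<alpha> \<le> real N" unfolding N_def by linarith
  then have aN: "4 \<le> \<alpha> * real N" using a by (simp add: field_simps)
  have "0 < \<alpha> / (4 * real m * (real N + 1))" using a m0 by simp
  then obtain c :: nat where c1: "1 \<le> c" and cb: "real c / 2 ^ c < \<alpha> / (4 * real m * (real N + 1))"
    using exists_c by blast
  define b where "b = N * c"
  have b1: "1 \<le> b" using N1 c1 by (simp add: b_def)
  define W where "W = (\<lambda>(q, u). snd (run T q u)) ` ({..<m} \<times> {u. length u = b})"
  have finW: "finite W" unfolding W_def using finite_bool_lists by simp
  have cardW: "card W \<le> m * 2 ^ b"
  proof -
    have "card W \<le> card ({..<m} \<times> {u :: bool list. length u = b})" unfolding W_def
      by (rule card_image_le) (simp add: finite_bool_lists)
    also have "\<dots> = m * 2 ^ b" by (simp add: card_cartesian_product card_bool_lists)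
    finally show ?thesis .
  qed
  define g where "g = (\<lambda>w::bool list. if b + c \<le> length w then length w else 0)"
  define cnt where "cnt = (\<lambda>n (w::bool list). card {i. i < n \<and> map S [i..<i + length w] = w})"
  define \<beta> where "\<beta> = \<alpha> / 4 / (real (card W) + 1)"
  have be: "0 < \<beta>" using a by (simp add: \<beta>_def)
  have E1: "\<forall>\<^sub>F n in sequentially. \<forall>w\<in>W. real (g w) * real (cnt n w) \<le> real n * (real (g w) / 2 ^ length w + \<beta>)"
    using finW unfolding cnt_def by (rule eventually_ball_finite) (use freq_bound[OF nrm be] in blast)
  have E2: "\<forall>\<^sub>F n in sequentially. 4 * real M * real b < real n * \<alpha>"
  proof -
    have "\<forall>\<^sub>F n in sequentially. nat \<lceil>4 * real M * real b / \<alpha>\<rceil> + 1 \<le> n" by (rule eventually_ge_at_top)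
    then show ?thesis
    proof eventually_elim
      case (elim n)
      then have "4 * real M * real b / \<alpha> < real n" by linarith
      then show ?case using a by (simp add: field_simps)
    qed
  qed
  have sumW: "(\<Sum>w\<in>W. real (g w) / 2 ^ length w) \<le> \<alpha> / 4"
  proof -
    have "(\<Sum>w\<in>W. real (g w) / 2 ^ length w) \<le> (\<Sum>w\<in>W. real (b + c) / 2 ^ (b + c))"
    proof (rule sum_mono)
      fix w assume "w \<in> W"
      show "real (g w) / 2 ^ length w \<le> real (b + c) / 2 ^ (b + c)"
      proof (cases "b + c \<le> length w")
        case True then show ?thesis using ratio_mono[OF True] c1 by (simp add: g_def)
      qed (simp add: g_def)
    qed
    also have "\<dots> = real (card W) * (real (b + c) / 2 ^ (b + c))" by simp
    also have "\<dots> \<le> real (m * 2 ^ b) * (real (b + c) / 2 ^ (b + c))"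
    proof -
      have "real (card W) \<le> real m * 2 ^ b" using cardW
        by (metis of_nat_le_iff of_nat_mult of_nat_numeral of_nat_power)
      then show ?thesis by (intro mult_right_mono) simp_all
    qed
    also have "\<dots> = real m * (real N + 1) * (real c / 2 ^ c)"
      by (simp add: b_def power_add field_simps)
    also have "\<dots> \<le> \<alpha> / 4"
    proof -
      have "real m * (real N + 1) > 0" using m0 by simp
      then show ?thesis using cb by (simp add: field_simps)
    qed
    finally show ?thesis .
  qed
  have cWb: "real (card W) * \<beta> \<le> \<alpha> / 4"
    using a by (simp add: \<beta>_def field_simps)
  show ?thesis
    using E1 E2
  proof eventually_elim
    case (elim n)
    show ?case
    proof (intro allI impI)
      fix p assume out: "fst_output T p = prefix_seq S n"
      obtain us r where p: "p = concat us @ r" and us: "\<forall>u\<in>set us. length u = b" and r: "length r < b"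
        using chunk b1 by (metis less_le_trans zero_less_one)
      define q0 where "q0 = fst_start T"
      have q0: "q0 < m" using wf by (simp add: wf_fst_def q0_def m_def)
      define ws where "ws = pieces T q0 us"
      define qe where "qe = fst (run T q0 (concat us))"
      have qe: "qe < m" using run_state wf q0 by (simp add: qe_def m_def)
      define tl where "tl = snd (run T qe r)"
      have x: "prefix_seq S n = concat ws @ tl"
        using out by (simp add: output_run p run_append run_concat ws_def tl_def qe_def q0_def)
      have nlen: "n = length (concat ws) + length tl"
        using arg_cong[OF x, of length] by (simp add: prefix_seq_def)
      have tl_le: "length tl \<le> M * b"
      proof -
        have "length tl \<le> M * length r" using run_len wf qe by (simp add: tl_def M_def m_def)
        also have "\<dots> \<le> M * b" using r by simp
        finally show ?thesis .
      qed
      have plen: "length us * b \<le> length p" using length_concat_const[OF us] p by simp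
      have wsW: "set ws \<subseteq> W" unfolding ws_def W_def m_def using pieces_in[OF wf _ us] q0 m_def by blast
      define L where "L = length (concat ws)"
      have Ln: "L \<le> n" using nlen L_def by simp
      have pre: "map S [0..<0 + L] = concat ws"
      proof -
        have "take L (prefix_seq S n) = concat ws" using x L_def by simp
        then show ?thesis using Ln by (simp add: prefix_seq_def take_map)
      qed
      have l1: "L \<le> (b + c) * length ws + sum_list (map g ws)"
        unfolding L_def g_def by (rule len_split)
      have l2: "sum_list (map g ws) \<le> (\<Sum>w\<in>W. cnt n w * g w)"
      proof -
        have "sum_list (map g ws) = (\<Sum>w\<in>set ws. count_list ws w * g w)"
          by (rule sum_list_map_eq_sum_count)
        also have "\<dots> \<le> (\<Sum>w\<in>W. count_list ws w * g w)"
          using finW wsW by (intro sum_mono2) auto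
        also have "\<dots> \<le> (\<Sum>w\<in>W. cnt n w * g w)"
        proof (rule sum_mono)
          fix w assume "w \<in> W"
          show "count_list ws w * g w \<le> cnt n w * g w"
          proof (cases "b + c \<le> length w")
            case True
            then have wne: "w \<noteq> []" using b1 by auto
            have "count_list ws w \<le> card {j. 0 \<le> j \<and> j + length w \<le> 0 + length (concat ws) \<and> map S [j..<j + length w] = w}"
              using count_occ[OF wne, of S 0 ws] pre L_def by simp
            also have "\<dots> \<le> cnt n w" unfolding cnt_def
            proof (rule card_mono)
              show "finite {i. i < n \<and> map S [i..<i + length w] = w}" by simp
              show "{j. 0 \<le> j \<and> j + length w \<le> 0 + length (concat ws) \<and> map S [j..<j + length w] = w}
                    \<subseteq> {i. i < n \<and> map S [i..<i + length w] = w}"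
                using Ln L_def wne by (cases w) auto
            qed
            finally show ?thesis by simp
          qed (simp add: g_def)
        qed
        finally show ?thesis .
      qed
      have l3: "real (\<Sum>w\<in>W. cnt n w * g w) \<le> real n * (\<alpha> / 2)"
      proof -
        have "real (\<Sum>w\<in>W. cnt n w * g w) = (\<Sum>w\<in>W. real (g w) * real (cnt n w))"
          by (simp add: mult.commute)
        also have "\<dots> \<le> (\<Sum>w\<in>W. real n * (real (g w) / 2 ^ length w + \<beta>))"
          using elim(1) by (intro sum_mono) auto
        also have "\<dots> = real n * ((\<Sum>w\<in>W. real (g w) / 2 ^ length w) + real (card W) * \<beta>)"
          by (simp add: sum.distrib sum_distrib_left distrib_left times_divide_eq_right del: times_divide_eq_right)
        also have "\<dots> \<le> real n * (\<alpha> / 4 + \<alpha> / 4)"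
          using sumW cWb by (intro mult_left_mono) auto
        finally show ?thesis by simp
      qed
      have main: "real n \<le> real (b + c) * real (length us) + real n * (\<alpha> / 2) + real M * real b"
      proof -
        have "n \<le> (b + c) * length us + (\<Sum>w\<in>W. cnt n w * g w) + M * b"
          using nlen l1 l2 tl_le L_def ws_def by simp
        then have "real n \<le> real ((b + c) * length us + (\<Sum>w\<in>W. cnt n w * g w) + M * b)" by linarith
        then show ?thesis using l3 by (simp only: of_nat_add of_nat_mult)
      qed
      define t where "t = real (length us)"
      define P where "P = real (length p)"
      have tP: "real N * real c * t \<le> P"
      proof -
        have "real (length us * b) \<le> real (length p)" using plen by (simp only: of_nat_le_iff)
        then show ?thesis by (simp add: t_def P_def b_def mult_ac)
      qed
      have t0: "0 \<le> t" by (simp add: t_def)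
      have "real (b + c) * t = real N * real c * t + real c * t" by (simp add: b_def algebra_simps)
      also have "real c * t \<le> P * (\<alpha> / 4)"
      proof -
        have "4 * (real c * t) \<le> \<alpha> * real N * (real c * t)"
          using aN t0 by (intro mult_right_mono) auto
        also have "\<dots> \<le> \<alpha> * P" using tP a by (simp add: mult.assoc mult_left_mono mult.left_commute)
        finally show ?thesis by (simp add: mult_ac)
      qed
      then have "real N * real c * t + real c * t \<le> P * (1 + \<alpha> / 4)" using tP by (simp add: algebra_simps)
      finally have bt: "real (b + c) * t \<le> P * (1 + \<alpha> / 4)" by simp
      have "real n * (1 - \<alpha> / 2) - real M * real b \<le> P * (1 + \<alpha> / 4)"
        using main bt t_def by (simp add: algebra_simps)
      moreover have "real n * (1 - 3 * \<alpha> / 4) < real n * (1 - \<alpha> / 2) - real M * real b"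
        using elim(2) by (simp add: algebra_simps)
      moreover have "(1 - \<alpha>) * real n * (1 + \<alpha> / 4) \<le> real n * (1 - 3 * \<alpha> / 4)"
      proof -
        have "(1 - \<alpha>) * real n * (1 + \<alpha> / 4) = real n * (1 - 3 * \<alpha> / 4) - real n * \<alpha> * \<alpha> / 4"
          by (simp add: algebra_simps)
        moreover have "0 \<le> real n * \<alpha> * \<alpha> / 4" using a by simp
        ultimately show ?thesis by linarith
      qed
      ultimately have "(1 - \<alpha>) * real n * (1 + \<alpha> / 4) < P * (1 + \<alpha> / 4)" by linarith
      then show "(1 - \<alpha>) * real n < real (length p)"
        using a by (simp add: P_def mult_less_cancel_right)
    qed
  qed
qed


lemma finite_T:
  fixes \<sigma> :: "fst \<Rightarrow> bool list"
  assumes "inj_on \<sigma> {T. wf_fst T}"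
  shows "finite {T. wf_fst T \<and> length (\<sigma> T) \<le> k}"
proof -
  have inj: "inj_on \<sigma> {T. wf_fst T \<and> length (\<sigma> T) \<le> k}"
    using assms by (rule inj_on_subset) auto
  have "\<sigma> ` {T. wf_fst T \<and> length (\<sigma> T) \<le> k} \<subseteq> {xs. set xs \<subseteq> (UNIV :: bool set) \<and> length xs \<le> k}"
    by auto
  moreover have "finite {xs. set xs \<subseteq> (UNIV :: bool set) \<and> length xs \<le> k}"
    by (rule finite_lists_length_le) simp
  ultimately have "finite (\<sigma> ` {T. wf_fst T \<and> length (\<sigma> T) \<le> k})" by (rule finite_subset)
  then show ?thesis using finite_imageD inj by blast
qed

lemma FS_lower:
  assumes inj: "inj_on \<sigma> {T. wf_fst T}" and nrm: "normal_seq S" and a: "0 < \<alpha>"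
  shows "\<forall>\<^sub>F n in sequentially. ereal ((1 - \<alpha>) * real n) \<le> FS \<sigma> k (prefix_seq S n)"
proof -
  have "\<forall>\<^sub>F n in sequentially. \<forall>T\<in>{T. wf_fst T \<and> length (\<sigma> T) \<le> k}.
          \<forall>p. fst_output T p = prefix_seq S n \<longrightarrow> (1 - \<alpha>) * real n < real (length p)"
    using finite_T[OF inj] by (rule eventually_ball_finite) (use compress_lb nrm a in blast)
  then show ?thesis
  proof eventually_elim
    case (elim n)
    show ?case unfolding FS_def
    proof (rule INF_greatest)
      fix p assume "p \<in> {p. \<exists>T. wf_fst T \<and> length (\<sigma> T) \<le> k \<and> fst_output T p = prefix_seq S n}"
      then show "ereal ((1 - \<alpha>) * real n) \<le> ereal (real (length p))" using elim by force
    qed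
  qed
qed

lemma FS_upper: assumes "length (\<sigma> idT) \<le> k" shows "FS \<sigma> k x \<le> ereal (real (length x))"
proof -
  have "x \<in> {p. \<exists>T. wf_fst T \<and> length (\<sigma> T) \<le> k \<and> fst_output T p = x}"
    using idT_wf idT_out assms by blast
  then show ?thesis unfolding FS_def by (rule INF_lower)
qed

lemma FS_nonneg: "0 \<le> FS \<sigma> k x"
  unfolding FS_def by (rule INF_greatest) simp

lemma FS_anti: "k \<le> k' \<Longrightarrow> FS \<sigma> k' x \<le> FS \<sigma> k x"
  unfolding FS_def by (rule INF_superset_mono) (use le_trans in blast, simp)

lemma freq_contra:
  assumes "\<exists>\<^sub>\<infinity>n. P n" "\<forall>\<^sub>F n in sequentially. \<not> P n" shows False
proof -
  have "\<exists>\<^sub>F n in sequentially. P n" using assms(1) by (simp add: cofinite_eq_sequentially)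
  then have "\<exists>\<^sub>F n in sequentially. \<not> P n \<and> P n" using assms(2) by (rule frequently_eventually_conj)
  then show False using frequently_ex by blast
qed

theorem proposition1:
  fixes \<sigma> :: "fst \<Rightarrow> bool list" and S :: "nat \<Rightarrow> bool"
  assumes "inj_on \<sigma> {T. wf_fst T}"
  shows "(Dim_FS \<sigma> S = 0 \<longrightarrow> fs_shallow \<sigma> S) \<and> (normal_seq S \<longrightarrow> fs_shallow \<sigma> S)"
proof (intro conjI impI)
  assume D0: "Dim_FS \<sigma> S = 0"
  show "fs_shallow \<sigma> S" unfolding fs_shallow_def fs_deep_def
  proof
    assume "\<exists>\<alpha>>0. \<forall>k. \<exists>k'. \<exists>\<^sub>\<infinity>n. ereal (\<alpha> * real n) \<le> FS \<sigma> k (prefix_seq S n) - FS \<sigma> k' (prefix_seq S n)"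
    then obtain \<alpha> where a: "\<alpha> > 0" and H: "\<forall>k. \<exists>k'. \<exists>\<^sub>\<infinity>n. ereal (\<alpha> * real n) \<le> FS \<sigma> k (prefix_seq S n) - FS \<sigma> k' (prefix_seq S n)"
      by blast
    define G where "G = (\<lambda>k. limsup (\<lambda>n. FS \<sigma> k (prefix_seq S n) / ereal (real n)))"
    have dec: "decseq G" unfolding decseq_def G_def
    proof (intro allI impI)
      fix k k' :: nat assume kk: "k \<le> k'"
      show "limsup (\<lambda>n. FS \<sigma> k' (prefix_seq S n) / ereal (real n)) \<le> limsup (\<lambda>n. FS \<sigma> k (prefix_seq S n) / ereal (real n))"
      proof (rule Limsup_mono)
        show "\<forall>\<^sub>F n in sequentially. FS \<sigma> k' (prefix_seq S n) / ereal (real n) \<le> FS \<sigma> k (prefix_seq S n) / ereal (real n)"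
          using eventually_ge_at_top[of "1::nat"]
        proof eventually_elim
          case (elim n)
          then show ?case using FS_anti[OF kk] by (intro ereal_divide_right_mono) auto
        qed
      qed
    qed
    have "G \<longlonglongrightarrow> (INF i. G i)" using dec by (rule LIMSEQ_INF)
    then have "lim G = (INF i. G i)" by (rule limI)
    then have "(INF i. G i) = 0" using D0 by (simp add: Dim_FS_def G_def)
    then have "(INF i. G i) < ereal \<alpha>" using a by simp
    then obtain k where Gk: "G k < ereal \<alpha>" by (auto simp: INF_less_iff)
    have ev: "\<forall>\<^sub>F n in sequentially. FS \<sigma> k (prefix_seq S n) / ereal (real n) < ereal \<alpha>"
      using Gk unfolding G_def by (rule Limsup_lessD)
    obtain k' where F: "\<exists>\<^sub>\<infinity>n. ereal (\<alpha> * real n) \<le> FS \<sigma> k (prefix_seq S n) - FS \<sigma> k' (prefix_seq S n)"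
      using H by blast
    show False
    proof (rule freq_contra[OF F])
      show "\<forall>\<^sub>F n in sequentially. \<not> ereal (\<alpha> * real n) \<le> FS \<sigma> k (prefix_seq S n) - FS \<sigma> k' (prefix_seq S n)"
        using ev eventually_ge_at_top[of "1::nat"]
      proof eventually_elim
        case (elim n)
        have n0: "0 < ereal (real n)" using elim(2) by simp
        have lt: "FS \<sigma> k (prefix_seq S n) < ereal \<alpha> * ereal (real n)"
          using elim(1) ereal_divide_less_iff[OF n0] by simp
        have "FS \<sigma> k (prefix_seq S n) - FS \<sigma> k' (prefix_seq S n) \<le> FS \<sigma> k (prefix_seq S n) - 0"
          by (rule ereal_minus_mono) (simp_all add: FS_nonneg)
        then show ?case using lt by simp
      qed
    qed
  qed
next
  assume nrm: "normal_seq S"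
  show "fs_shallow \<sigma> S" unfolding fs_shallow_def fs_deep_def
  proof
    assume "\<exists>\<alpha>>0. \<forall>k. \<exists>k'. \<exists>\<^sub>\<infinity>n. ereal (\<alpha> * real n) \<le> FS \<sigma> k (prefix_seq S n) - FS \<sigma> k' (prefix_seq S n)"
    then obtain \<alpha> where a: "\<alpha> > 0" and H: "\<forall>k. \<exists>k'. \<exists>\<^sub>\<infinity>n. ereal (\<alpha> * real n) \<le> FS \<sigma> k (prefix_seq S n) - FS \<sigma> k' (prefix_seq S n)"
      by blast
    define k where "k = length (\<sigma> idT)"
    obtain k' where F: "\<exists>\<^sub>\<infinity>n. ereal (\<alpha> * real n) \<le> FS \<sigma> k (prefix_seq S n) - FS \<sigma> k' (prefix_seq S n)"
      using H by blast
    have a2: "0 < \<alpha> / 2" using a by simp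
    show False
    proof (rule freq_contra[OF F])
      show "\<forall>\<^sub>F n in sequentially. \<not> ereal (\<alpha> * real n) \<le> FS \<sigma> k (prefix_seq S n) - FS \<sigma> k' (prefix_seq S n)"
        using FS_lower[OF assms nrm a2, of k'] eventually_ge_at_top[of "1::nat"]
      proof eventually_elim
        case (elim n)
        have up: "FS \<sigma> k (prefix_seq S n) \<le> ereal (real n)"
          using FS_upper[of \<sigma> k "prefix_seq S n"] by (simp add: k_def prefix_seq_def)
        have "FS \<sigma> k (prefix_seq S n) - FS \<sigma> k' (prefix_seq S n) \<le> ereal (real n) - ereal ((1 - \<alpha> / 2) * real n)"
          using up elim(1) by (rule ereal_minus_mono)
        also have "\<dots> = ereal (\<alpha> / 2 * real n)" by (simp add: algebra_simps)
        also have "\<dots> < ereal (\<alpha> * real n)" using a elim(2) by simp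
        finally show ?case by simp
      qed
    qed
  qed
qed

end
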